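(* Let $k$ be a positive integer. Every tournament with $n$ vertices and cutwidth at most $k$ has at most $A\cdot\exp\bigl(2C\sqrt{k(1+\ln 2k)}\bigr)\cdot(n+1)$ $k$-cuts, where $C=\pi\sqrt{2/3}$ and $A$ is a constant such that $p(m)\le\frac{A}{m+1}\exp(C\sqrt{m})$ for all integers $m\ge 0$.
   Context: A tournament is a simple digraph in which for every pair of distinct vertices $v,w$ exactly one of $(v,w),(w,v)$ is an arc. The width of an ordering $(v_1,\dots,v_n)$ of $V(T)$ is $\max_{1\le t\le n-1}|E(\{v_{t+1},\dots,v_n\},\{v_1,\dots,v_t\})|$, where $E(A,B)$ is the set of arcs with tail in $A$ and head in $B$; the cutwidth of $T$ is the minimum width over all orderings. A $k$-cut of a digraph $T$ is an ordered partition $(X,Y)$ of $V(T)$ (either part may be empty) such that there are at most $k$ arcs $(u,v)\in E(T)$ with $u\in Y$ and $v\in X$. $p(m)$ denotes the number of partitions of the integer $m$; such $A$ exists by the Hardy–Ramanujan estimate. *)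

theory Defs
  imports Complex_Main "HOL-Library.Multiset"
begin

definition tournament :: "'a set \<Rightarrow> ('a \<times> 'a) set \<Rightarrow> bool" where
  "tournament V E \<longleftrightarrow> finite V \<and> E \<subseteq> V \<times> V \<and> (\<forall>v. (v, v) \<notin> E) \<and>
     (\<forall>v\<in>V. \<forall>w\<in>V. v \<noteq> w \<longrightarrow> ((v, w) \<in> E \<longleftrightarrow> (w, v) \<notin> E))"

definition arcs_between :: "('a \<times> 'a) set \<Rightarrow> 'a set \<Rightarrow> 'a set \<Rightarrow> ('a \<times> 'a) set" where
  "arcs_between E A B = {(u, v) \<in> E. u \<in> A \<and> v \<in> B}"

definition ordering_width :: "('a \<times> 'a) set \<Rightarrow> 'a list \<Rightarrow> nat" where
  "ordering_width E vs = Max ({0} \<union>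
     {card (arcs_between E (set (drop t vs)) (set (take t vs))) | t. 1 \<le> t \<and> t \<le> length vs - 1})"

definition cutwidth :: "'a set \<Rightarrow> ('a \<times> 'a) set \<Rightarrow> nat" where
  "cutwidth V E = Min {ordering_width E vs | vs. distinct vs \<and> set vs = V}"

definition k_cuts :: "'a set \<Rightarrow> ('a \<times> 'a) set \<Rightarrow> nat \<Rightarrow> ('a set \<times> 'a set) set" where
  "k_cuts V E k = {(X, Y). X \<union> Y = V \<and> X \<inter> Y = {} \<and> card (arcs_between E Y X) \<le> k}"

definition partition_number :: "nat \<Rightarrow> nat" where
  "partition_number m = card {M :: nat multiset. (\<forall>x\<in>#M. 0 < x) \<and> sum_mset M = m}"

end

theory Submission
  imports Defs "HOL-Analysis.Harmonic_Numbers"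
begin

fun enc :: "nat \<Rightarrow> bool list \<Rightarrow> nat multiset" where
  "enc c [] = {#}"
| "enc c (True#w) = add_mset c (enc c w)"
| "enc c (False#w) = enc (Suc c) w"

lemma enc_ge: "x \<in># enc c w \<Longrightarrow> c \<le> x"
  by (induction c w rule: enc.induct) force+

lemma enc_inj: "length w = length w' \<Longrightarrow> enc c w = enc c w' \<Longrightarrow> w = w'"
proof (induction w arbitrary: c w')
  case Nil then show ?case by simp
next
  case (Cons a w)
  then obtain b w'' where w': "w' = b # w''" by (cases w') auto
  have ab: "a = b"
  proof (cases a; cases b)
    assume "a" "\<not> b"
    then have "c \<in># enc c (a#w)" by simp
    then have "c \<in># enc c w'" using Cons.prems(2) by simp
    then show ?thesis using \<open>\<not> b\<close> w' enc_ge[of c "Suc c" w''] by simp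
  next
    assume "\<not>a" "b"
    then have "c \<in># enc c w'" using w' by simp
    then have "c \<in># enc c (a#w)" using Cons.prems(2) by simp
    then show ?thesis using \<open>\<not> a\<close> enc_ge[of c "Suc c" w] by simp
  qed auto
  show ?case using Cons w' ab by (cases b) auto
qed

lemma size_enc: "size (enc c w) = length (filter id w)"
  by (induction c w rule: enc.induct) auto

fun ok :: "nat \<Rightarrow> nat \<Rightarrow> bool list \<Rightarrow> bool" where
  "ok K c [] = True"
| "ok K c (True#w) = (c * (length (filter id w) + 1) \<le> K \<and> ok K c w)"
| "ok K c (False#w) = ok K (Suc c) w"

lemma ok_sum: "ok K c w \<Longrightarrow> sum_mset (enc c w) \<le> (\<Sum>j\<in>{1..length (filter id w)}. K div j)"
proof (induction K c w rule: ok.induct)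
  case (2 K c w)
  have "c \<le> K div (length (filter id w) + 1)" using 2(2)
    by (simp add: div_greater_zero_iff less_eq_div_iff_mult_less_eq)
  then show ?case using 2 by (simp add: sum.cl_ivl_Suc id_def)
qed auto

lemma ok_intro: "(\<forall>i<length w. w!i \<longrightarrow> (c + length (filter Not (take i w))) * length (filter id (drop i w)) \<le> K) \<Longrightarrow> ok K c w"
proof (induction K c w rule: ok.induct)
  case (2 K c w)
  have a: "c * (length (filter id w) + 1) \<le> K" using 2(2)[rule_format, of 0] by simp
  have "ok K c w"
  proof (rule 2(1), intro allI impI)
    fix i assume "i < length w" "w!i"
    then show "(c + length (filter Not (take i w))) * length (filter id (drop i w)) \<le> K"
      using 2(2)[rule_format, of "Suc i"] by simp
  qed
  then show ?case using a by simp
next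
  case (3 K c w)
  show ?case
  proof (simp, rule 3(1), intro allI impI)
    fix i assume "i < length w" "w!i"
    then show "(Suc c + length (filter Not (take i w))) * length (filter id (drop i w)) \<le> K"
      using 3(2)[rule_format, of "Suc i"] by simp
  qed
qed auto


lemma mem_le_sum_mset: "(x::nat) \<in># M \<Longrightarrow> x \<le> sum_mset M"
  by (induction M) auto

lemma size_le_sum_mset: "(\<forall>x\<in>#M. 0 < (x::nat)) \<Longrightarrow> size M \<le> sum_mset M"
  by (induction M) auto

lemma finite_PS: "finite {M::nat multiset. (\<forall>x\<in>#M. 0<x) \<and> sum_mset M \<le> N}"
proof -
  have "{M::nat multiset. (\<forall>x\<in>#M. 0<x) \<and> sum_mset M \<le> N} \<subseteq> (\<Union>s\<in>{0..N}. multisets_of_size {0..N} s)"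
  proof
    fix M :: "nat multiset" assume "M \<in> {M. (\<forall>x\<in>#M. 0<x) \<and> sum_mset M \<le> N}"
    then have h: "\<forall>x\<in>#M. 0<x" "sum_mset M \<le> N" by auto
    have "set_mset M \<subseteq> {0..N}" using h(2) mem_le_sum_mset by fastforce
    moreover have "size M \<le> N" using size_le_sum_mset[OF h(1)] h(2) by simp
    ultimately show "M \<in> (\<Union>s\<in>{0..N}. multisets_of_size {0..N} s)"
      by (auto simp: multisets_of_size_def)
  qed
  moreover have "finite (\<Union>s\<in>{0..N}. multisets_of_size {0..N} s)"
    by (intro finite_UN_I finite_atLeastAtMost finite_multisets_of_size)
  ultimately show ?thesis by (rule finite_subset)
qed

lemma pn_mono: "m \<le> N \<Longrightarrow> partition_number m \<le> partition_number N"
proof -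
  assume mN: "m \<le> N"
  let ?f = "\<lambda>M. M + replicate_mset (N - m) (1::nat)"
  have "inj_on ?f {M::nat multiset. (\<forall>x\<in>#M. 0 < x) \<and> sum_mset M = m}"
    by (rule inj_onI) simp
  moreover have "?f ` {M::nat multiset. (\<forall>x\<in>#M. 0 < x) \<and> sum_mset M = m}
     \<subseteq> {M::nat multiset. (\<forall>x\<in>#M. 0 < x) \<and> sum_mset M = N}"
  proof (rule image_subsetI)
    fix M :: "nat multiset" assume "M \<in> {M::nat multiset. (\<forall>x\<in>#M. 0 < x) \<and> sum_mset M = m}"
    then have h: "\<forall>x\<in>#M. 0 < x" "sum_mset M = m" by auto
    have "\<forall>x\<in># ?f M. 0 < x"
    proof
      fix x assume "x \<in># ?f M"
      then have "x \<in># M \<or> x \<in># replicate_mset (N - m) (1::nat)" by simp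
      then show "0 < x" using h(1) by (metis in_replicate_mset zero_less_one)
    qed
    moreover have "sum_mset (?f M) = N" using h(2) mN by (simp add: sum_mset_replicate_mset)
    ultimately show "?f M \<in> {M::nat multiset. (\<forall>x\<in>#M. 0 < x) \<and> sum_mset M = N}" by simp
  qed
  moreover have "finite {M::nat multiset. (\<forall>x\<in>#M. 0 < x) \<and> sum_mset M = N}"
    by (rule finite_subset[OF _ finite_PS[of N]]) auto
  ultimately show ?thesis unfolding partition_number_def by (rule card_inj_on_le)
qed

lemma card_PS: "card {M::nat multiset. (\<forall>x\<in>#M. 0<x) \<and> sum_mset M \<le> N} \<le> (N+1) * partition_number N"
proof -
  have eq: "{M::nat multiset. (\<forall>x\<in>#M. 0<x) \<and> sum_mset M \<le> N} =
     (\<Union>I\<in>{0..N}. {M::nat multiset. (\<forall>x\<in>#M. 0<x) \<and> sum_mset M = I})" by fastforce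
  have "card (\<Union>I\<in>{0..N}. {M::nat multiset. (\<forall>x\<in>#M. 0<x) \<and> sum_mset M = I})
      \<le> (\<Sum>I\<in>{0..N}. card {M::nat multiset. (\<forall>x\<in>#M. 0<x) \<and> sum_mset M = I})"
    by (rule card_UN_le) simp
  also have "\<dots> \<le> (\<Sum>I\<in>{0..N}. partition_number N)"
  proof (rule sum_mono)
    fix I assume "I \<in> {0..N}"
    then have "partition_number I \<le> partition_number N" using pn_mono[of I N] by simp
    then show "card {M::nat multiset. (\<forall>x\<in>#M. 0<x) \<and> sum_mset M = I} \<le> partition_number N"
      by (simp add: partition_number_def)
  qed
  also have "\<dots> = (N+1) * partition_number N" by simp
  finally show ?thesis unfolding eq .
qed


lemma harm_le_ln: "m \<ge> 1 \<Longrightarrow> (harm m :: real) \<le> 1 + ln (real m)"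
proof -
  assume "m \<ge> 1"
  then obtain n where n: "m = Suc n" by (cases m) auto
  have "harm (Suc n) - ln (real (Suc n)) \<le> harm (Suc 0) - ln (real (Suc 0))"
    using decseq_harm_diff_ln unfolding decseq_def by (metis le0)
  also have "\<dots> = 1" by (simp add: harm_Suc harm_def)
  finally show ?thesis using n by simp
qed

lemma divsum_le: "K \<ge> 1 \<Longrightarrow> real (\<Sum>j\<in>{1..t}. K div j) \<le> real K * (1 + ln (real K))"
proof -
  assume K: "K \<ge> 1"
  have "(\<Sum>j\<in>{1..t}. K div j) \<le> (\<Sum>j\<in>{1..K}. K div j)"
  proof (cases "t \<le> K")
    case True then show ?thesis by (intro sum_mono2) auto
  next
    case False
    have "(\<Sum>j\<in>{1..t}. K div j) = (\<Sum>j\<in>{1..K}. K div j)"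
      by (rule sum.mono_neutral_right) (use False in auto)
    then show ?thesis by simp
  qed
  then have "real (\<Sum>j\<in>{1..t}. K div j) \<le> real (\<Sum>j\<in>{1..K}. K div j)" by linarith
  also have "\<dots> = (\<Sum>j\<in>{1..K}. real (K div j))" by simp
  also have "\<dots> \<le> (\<Sum>j\<in>{1..K}. real K * inverse (real j))"
    proof (rule sum_mono)
    fix j show "real (K div j) \<le> real K * inverse (real j)"
      using of_nat_div_le_of_nat[of K j] by (simp add: divide_inverse)
  qed
  also have "\<dots> = real K * harm K" by (simp add: harm_def sum_distrib_left)
  also have "\<dots> \<le> real K * (1 + ln (real K))" using harm_le_ln[OF K] by (simp add: mult_left_mono)
  finally show ?thesis .
qed


lemma cut_pairs:
  assumes hT: "tournament V E" and dist: "distinct vs" and setv: "set vs = V"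
    and cut: "\<forall>t. 1 \<le> t \<and> t \<le> length vs - 1 \<longrightarrow>
       card (arcs_between E (set (drop t vs)) (set (take t vs))) \<le> k"
    and XY: "X \<union> Y = V" "card (arcs_between E Y X) \<le> k"
    and i: "i < length vs"
  shows "card {j. j < i \<and> vs!j \<notin> X} * card {l. l < length vs - i \<and> vs!(i+l) \<in> X} \<le> 2*k"
proof (cases "i = 0")
  case True then show ?thesis by simp
next
  case False
  let ?n = "length vs"
  define As where "As = {j. j < i \<and> vs!j \<notin> X}"
  define Bs where "Bs = {l. l < ?n - i \<and> vs!(i+l) \<in> X}"
  have finE: "finite E" using hT unfolding tournament_def by (meson finite_SigmaI finite_subset)
  have EV: "E \<subseteq> V \<times> V" using hT unfolding tournament_def by blast
  have finA: "finite As" "finite Bs" unfolding As_def Bs_def by auto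
  define S1 where "S1 = {p \<in> As \<times> Bs. (vs!fst p, vs!(i + snd p)) \<in> E}"
  define S2 where "S2 = {p \<in> As \<times> Bs. (vs!fst p, vs!(i + snd p)) \<notin> E}"
  have split: "As \<times> Bs = S1 \<union> S2" unfolding S1_def S2_def by auto
  have inj_vs: "\<And>a b. a < ?n \<Longrightarrow> b < ?n \<Longrightarrow> vs!a = vs!b \<Longrightarrow> a = b"
    using dist nth_eq_iff_index_eq by blast
  have pair_inj: "\<And>p q. p \<in> As \<times> Bs \<Longrightarrow> q \<in> As \<times> Bs \<Longrightarrow> vs!fst p = vs!fst q \<Longrightarrow>
      vs!(i + snd p) = vs!(i + snd q) \<Longrightarrow> p = q"
  proof -
    fix p q assume pq: "p \<in> As \<times> Bs" "q \<in> As \<times> Bs" "vs!fst p = vs!fst q" "vs!(i + snd p) = vs!(i + snd q)"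
    obtain a b a' b' where ab: "p = (a,b)" "q = (a',b')" by (cases p, cases q)
    have h: "a < i" "a' < i" "b < ?n - i" "b' < ?n - i" using pq ab unfolding As_def Bs_def by auto
    have "a = a'" using inj_vs[of a a'] h i pq ab by auto
    moreover have "i + b = i + b'" using inj_vs[of "i+b" "i+b'"] h pq ab by auto
    ultimately show "p = q" using ab by simp
  qed
  have c1: "card S1 \<le> k"
  proof -
    have "card S1 \<le> card (arcs_between E Y X)"
    proof (rule card_inj_on_le)
      show "inj_on (\<lambda>p. (vs!fst p, vs!(i + snd p))) S1"
      proof (rule inj_onI)
        fix p q assume "p \<in> S1" "q \<in> S1" "(vs!fst p, vs!(i + snd p)) = (vs!fst q, vs!(i + snd q))"
        then show "p = q" unfolding S1_def using pair_inj by auto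
      qed
      show "(\<lambda>p. (vs!fst p, vs!(i + snd p))) ` S1 \<subseteq> arcs_between E Y X"
      proof
        fix a assume "a \<in> (\<lambda>p. (vs!fst p, vs!(i + snd p))) ` S1"
        then obtain j l where jl: "(j,l) \<in> S1" "a = (vs!j, vs!(i+l))" by auto
        then have "j < i" "vs!j \<notin> X" "vs!(i+l) \<in> X" "(vs!j, vs!(i+l)) \<in> E"
          unfolding S1_def As_def Bs_def by auto
        moreover have "vs!j \<in> V" using \<open>j < i\<close> i setv by auto
        ultimately show "a \<in> arcs_between E Y X" using jl XY unfolding arcs_between_def by auto
      qed
      show "finite (arcs_between E Y X)" unfolding arcs_between_def using finE
        by (rule finite_subset[rotated]) auto
    qed
    then show ?thesis using XY by simp
  qed
  have c2: "card S2 \<le> k"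
  proof -
    have "card S2 \<le> card (arcs_between E (set (drop i vs)) (set (take i vs)))"
    proof (rule card_inj_on_le)
      show "inj_on (\<lambda>p. (vs!(i + snd p), vs!fst p)) S2"
      proof (rule inj_onI)
        fix p q assume "p \<in> S2" "q \<in> S2" "(vs!(i + snd p), vs!fst p) = (vs!(i + snd q), vs!fst q)"
        then show "p = q" unfolding S2_def using pair_inj by auto
      qed
      show "(\<lambda>p. (vs!(i + snd p), vs!fst p)) ` S2 \<subseteq> arcs_between E (set (drop i vs)) (set (take i vs))"
      proof
        fix a assume "a \<in> (\<lambda>p. (vs!(i + snd p), vs!fst p)) ` S2"
        then obtain j l where jl: "(j,l) \<in> S2" "a = (vs!(i+l), vs!j)" by auto
        then have h: "j < i" "l < ?n - i" "(vs!j, vs!(i+l)) \<notin> E"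
          unfolding S2_def As_def Bs_def by auto
        have ne: "vs!j \<noteq> vs!(i+l)" proof
          assume "vs!j = vs!(i+l)"
          moreover have "j < ?n" "i + l < ?n" using h i by auto
          ultimately have "j = i + l" using inj_vs by blast
          then show False using h by simp
        qed
        have inV: "vs!j \<in> V" "vs!(i+l) \<in> V" using h i setv by auto
        have "(vs!(i+l), vs!j) \<in> E" using hT ne inV h(3) unfolding tournament_def by blast
        moreover have "vs!(i+l) \<in> set (drop i vs)"
          using h i by (metis add_diff_cancel_left' length_drop nth_drop nth_mem less_imp_le_nat)
        moreover have "vs!j \<in> set (take i vs)"
          using h i by (metis length_take min.absorb4 nth_mem nth_take order.strict_trans)
        ultimately show "a \<in> arcs_between E (set (drop i vs)) (set (take i vs))"
          using jl unfolding arcs_between_def by auto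
      qed
      show "finite (arcs_between E (set (drop i vs)) (set (take i vs)))" unfolding arcs_between_def using finE
        by (rule finite_subset[rotated]) auto
    qed
    also have "\<dots> \<le> k" using cut False i by auto
    finally show ?thesis .
  qed
  have "card As * card Bs = card (As \<times> Bs)" by (simp add: card_cartesian_product)
  also have "\<dots> \<le> card S1 + card S2" unfolding split by (rule card_Un_le)
  also have "\<dots> \<le> 2*k" using c1 c2 by simp
  finally show ?thesis unfolding As_def Bs_def .
qed


lemma get_ordering:
  assumes hT: "tournament V E" and hcw: "cutwidth V E \<le> k"
  obtains vs where "distinct vs" "set vs = V"
    "\<forall>t. 1 \<le> t \<and> t \<le> length vs - 1 \<longrightarrow> card (arcs_between E (set (drop t vs)) (set (take t vs))) \<le> k"
proof -
  have finV: "finite V" using hT unfolding tournament_def by blast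
  define OS where "OS = {vs. distinct vs \<and> set vs = V}"
  have "OS \<subseteq> {xs. set xs \<subseteq> V \<and> length xs = card V}" unfolding OS_def using distinct_card by fastforce
  then have finOS: "finite OS" using finite_lists_length_eq[OF finV] finite_subset by blast
  have neOS: "OS \<noteq> {}" unfolding OS_def using finite_distinct_list[OF finV] by auto
  have eq: "{ordering_width E vs | vs. distinct vs \<and> set vs = V} = ordering_width E ` OS"
    unfolding OS_def by blast
  have "cutwidth V E \<in> ordering_width E ` OS"
    unfolding cutwidth_def eq using finOS neOS by (intro Min_in) auto
  then obtain vs where vs: "vs \<in> OS" "ordering_width E vs \<le> k" using hcw by auto
  have "\<forall>t. 1 \<le> t \<and> t \<le> length vs - 1 \<longrightarrow> card (arcs_between E (set (drop t vs)) (set (take t vs))) \<le> k"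
  proof (intro allI impI)
    fix t assume t: "1 \<le> t \<and> t \<le> length vs - 1"
    let ?S = "{card (arcs_between E (set (drop t vs)) (set (take t vs))) | t. 1 \<le> t \<and> t \<le> length vs - 1}"
    have "?S = (\<lambda>t. card (arcs_between E (set (drop t vs)) (set (take t vs)))) ` {1..length vs - 1}"
      by auto
    then have "finite ({0} \<union> ?S)" by simp
    moreover have "card (arcs_between E (set (drop t vs)) (set (take t vs))) \<in> {0} \<union> ?S" using t by blast
    ultimately have "card (arcs_between E (set (drop t vs)) (set (take t vs))) \<le> Max ({0} \<union> ?S)"
      by (rule Max_ge)
    also have "\<dots> = ordering_width E vs" unfolding ordering_width_def ..
    finally show "card (arcs_between E (set (drop t vs)) (set (take t vs))) \<le> k" using vs by simp
  qed
  then show ?thesis using that vs unfolding OS_def by blast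
qed

theorem mainTheorem12:
  fixes A :: real and k :: nat and V :: "'a set" and E :: "('a \<times> 'a) set"
  defines "C \<equiv> pi * sqrt (2 / 3)"
  assumes hA: "\<forall>m::nat. real (partition_number m) \<le> A / (real m + 1) * exp (C * sqrt (real m))"
    and hk: "0 < k"
    and hT: "tournament V E"
    and hcw: "cutwidth V E \<le> k"
  shows "real (card (k_cuts V E k))
           \<le> A * exp (2 * C * sqrt (real k * (1 + ln (2 * real k)))) * (real (card V) + 1)"
proof -
  obtain vs where dist: "distinct vs" and setv: "set vs = V" and
    cut: "\<forall>t. 1 \<le> t \<and> t \<le> length vs - 1 \<longrightarrow> card (arcs_between E (set (drop t vs)) (set (take t vs))) \<le> k"
    using get_ordering[OF hT hcw] by blast
  define n where "n = length vs"
  have cardV: "card V = n" unfolding n_def using distinct_card[OF dist] setv by simp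
  define K where "K = 2 * k"
  have K1: "K \<ge> 1" using hk unfolding K_def by simp
  define Nn where "Nn = nat \<lfloor>real K * (1 + ln (real K))\<rfloor>"
  define encX where "encX X = enc 0 (map (\<lambda>v. v \<in> X) vs)" for X
  define f where "f p = (count (encX (fst p)) 0, filter_mset ((<) 0) (encX (fst p)))" for p :: "'a set \<times> 'a set"
  define PS where "PS = {M::nat multiset. (\<forall>x\<in>#M. 0<x) \<and> sum_mset M \<le> Nn}"
  define T where "T = {0..n} \<times> PS"
  have sumb: "sum_mset (encX X) \<le> Nn" if XY: "(X,Y) \<in> k_cuts V E k" for X Y
  proof -
    define w where "w = map (\<lambda>v. v \<in> X) vs"
    have XY': "X \<union> Y = V" "card (arcs_between E Y X) \<le> k" using XY unfolding k_cuts_def by auto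
    have "ok K 0 w"
    proof (rule ok_intro, intro allI impI)
      fix i assume i: "i < length w" "w!i"
      then have i': "i < length vs" unfolding w_def by simp
      have e1: "length (filter Not (take i w)) = card {j. j < i \<and> vs!j \<notin> X}"
        unfolding length_filter_conv_card using i' by (intro arg_cong[where f=card]) (auto simp: w_def)
      have e2: "length (filter id (drop i w)) = card {l. l < length vs - i \<and> vs!(i+l) \<in> X}"
        unfolding length_filter_conv_card using i' by (intro arg_cong[where f=card]) (auto simp: w_def)
      show "(0 + length (filter Not (take i w))) * length (filter id (drop i w)) \<le> K"
        unfolding e1 e2 K_def using cut_pairs[OF hT dist setv cut XY' i'] by simp
    qed
    then have "sum_mset (enc 0 w) \<le> (\<Sum>j\<in>{1..length (filter id w)}. K div j)" by (rule ok_sum)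
    then have "real (sum_mset (enc 0 w)) \<le> real K * (1 + ln (real K))"
      using divsum_le[OF K1, of "length (filter id w)"] by linarith
    then show ?thesis unfolding Nn_def encX_def w_def[symmetric] by (rule le_nat_floor)
  qed
  have injf: "inj_on f (k_cuts V E k)"
  proof (rule inj_onI)
    fix p q assume p: "p \<in> k_cuts V E k" and q: "q \<in> k_cuts V E k" and fpq: "f p = f q"
    obtain X Y X' Y' where pq: "p = (X,Y)" "q = (X',Y')" by (cases p, cases q)
    have XY: "X \<union> Y = V" "X \<inter> Y = {}" "X' \<union> Y' = V" "X' \<inter> Y' = {}"
      using p q pq unfolding k_cuts_def by auto
    have "encX X = encX X'"
    proof (subst multiset_eq_iff, rule allI)
      fix x show "count (encX X) x = count (encX X') x"
      proof (cases "x = 0")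
        case True then show ?thesis using fpq pq unfolding f_def by simp
      next
        case False
        have "count (filter_mset ((<) 0) (encX X)) x = count (filter_mset ((<) 0) (encX X')) x"
          using fpq pq unfolding f_def by simp
        then show ?thesis using False by simp
      qed
    qed
    then have weq: "map (\<lambda>v. v \<in> X) vs = map (\<lambda>v. v \<in> X') vs"
      unfolding encX_def by (rule enc_inj[rotated]) simp
    have "X = X'"
    proof
      show "X \<subseteq> X'"
      proof
        fix v assume "v \<in> X"
        then have "v \<in> set vs" using XY setv by blast
        then show "v \<in> X'" using weq \<open>v \<in> X\<close> by (metis (mono_tags) map_eq_conv)
      qed
      show "X' \<subseteq> X"
      proof
        fix v assume "v \<in> X'"
        then have "v \<in> set vs" using XY setv by blast
        then show "v \<in> X" using weq \<open>v \<in> X'\<close> by (metis (mono_tags) map_eq_conv)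
      qed
    qed
    moreover have "Y = V - X" "Y' = V - X'" using XY by auto
    ultimately show "p = q" using pq by simp
  qed
  have imgf: "f ` (k_cuts V E k) \<subseteq> T"
  proof
    fix a assume "a \<in> f ` (k_cuts V E k)"
    then obtain X Y where XY: "(X,Y) \<in> k_cuts V E k" "a = f (X,Y)" by auto
    have "count (encX X) 0 \<le> size (encX X)" by (rule count_le_size)
    also have "\<dots> \<le> n" unfolding encX_def size_enc n_def by (metis length_filter_le length_map)
    finally have a1: "count (encX X) 0 \<le> n" .
    have "sum_mset (filter_mset ((<) 0) (encX X)) \<le> sum_mset (encX X)"
      by (metis le_add1 multiset_partition sum_mset.union)
    also have "\<dots> \<le> Nn" using sumb[OF XY(1)] .
    finally have "filter_mset ((<) 0) (encX X) \<in> PS" unfolding PS_def by auto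
    then show "a \<in> T" using a1 XY unfolding T_def f_def by auto
  qed
  have finT: "finite T" unfolding T_def PS_def using finite_PS by blast
  have "card (k_cuts V E k) \<le> card T" by (rule card_inj_on_le[OF injf imgf finT])
  also have "\<dots> = (n+1) * card PS" unfolding T_def by (simp add: card_cartesian_product)
  also have "\<dots> \<le> (n+1) * ((Nn+1) * partition_number Nn)" 
    using card_PS[of Nn] unfolding PS_def by (rule mult_le_mono2)
  finally have c0: "card (k_cuts V E k) \<le> (n+1) * ((Nn+1) * partition_number Nn)" .
  have c: "real (card (k_cuts V E k)) \<le> (real n + 1) * ((real Nn + 1) * real (partition_number Nn))"
  proof -
    have "real (card (k_cuts V E k)) \<le> real ((n+1) * ((Nn+1) * partition_number Nn))"
      using c0 by (rule of_nat_mono)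
    also have "\<dots> = (real n + 1) * ((real Nn + 1) * real (partition_number Nn))" by (simp add: algebra_simps)
    finally show ?thesis .
  qed
  have pN: "real (partition_number Nn) \<le> A / (real Nn + 1) * exp (C * sqrt (real Nn))" using hA by blast
  have A0: "A \<ge> 0"
  proof -
    have "0 \<le> A / (real Nn + 1) * exp (C * sqrt (real Nn))" using pN of_nat_0_le_iff[of "partition_number Nn"] by linarith
    show ?thesis
    proof (rule ccontr)
      assume "\<not> 0 \<le> A"
      then have "A / (real Nn + 1) < 0" by (simp add: divide_neg_pos)
      then have "A / (real Nn + 1) * exp (C * sqrt (real Nn)) < 0" by (rule mult_neg_pos) simp
      then show False using \<open>0 \<le> A / (real Nn + 1) * exp (C * sqrt (real Nn))\<close> by linarith
    qed
  qed
  have "(real Nn + 1) * real (partition_number Nn) \<le> A * exp (C * sqrt (real Nn))"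
    using pN by (simp add: field_simps)
  also have "\<dots> \<le> A * exp (2 * C * sqrt (real k * (1 + ln (2 * real k))))"
  proof -
    have C0: "C \<ge> 0" unfolding C_def by simp
    have lnpos: "0 \<le> ln (2 * real k)" using hk by simp
    have "real Nn \<le> real K * (1 + ln (real K))" unfolding Nn_def using lnpos K_def
      by (simp add: of_nat_nat)
    also have "\<dots> \<le> 4 * (real k * (1 + ln (2 * real k)))" unfolding K_def using lnpos by simp
    finally have "sqrt (real Nn) \<le> sqrt (4 * (real k * (1 + ln (2 * real k))))" by simp
    also have "\<dots> = 2 * sqrt (real k * (1 + ln (2 * real k)))" by (simp add: real_sqrt_mult)
    finally have "C * sqrt (real Nn) \<le> C * (2 * sqrt (real k * (1 + ln (2 * real k))))"
      using C0 by (rule mult_left_mono)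
    then have "C * sqrt (real Nn) \<le> 2 * C * sqrt (real k * (1 + ln (2 * real k)))" by simp
    then show ?thesis using A0 by (simp add: mult_left_mono)
  qed
  finally have "(real n + 1) * ((real Nn + 1) * real (partition_number Nn))
      \<le> (real n + 1) * (A * exp (2 * C * sqrt (real k * (1 + ln (2 * real k)))))"
    by (rule mult_left_mono) simp
  with c have "real (card (k_cuts V E k)) \<le> (real n + 1) * (A * exp (2 * C * sqrt (real k * (1 + ln (2 * real k)))))"
    by (rule order_trans)
  then show ?thesis unfolding cardV by (metis mult.commute)
qed

end
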